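(* Consider a credit-attribution game in which every paper has exactly two authors, and the fractional attack model on player $x$ in the reliability extension of the full obligation game $\Gamma_{FO}$, with fixed $p_x\in[0,1]$, baseline reliabilities $p^*_l\in(0,1]$, cost slopes $L_l,R_l>0$ and budget $B\ge0$. Then the following profile is an optimal attack: sort the coauthors $l\in CA(x)$ in decreasing order of $C(x,l)/L_l$ (ties broken arbitrarily); for $i=1,\dots,|CA(x)|$ in turn, decrease the reliability of the $i$-th coauthor to $0$ while the remaining budget allows it; when the remaining budget does not allow decreasing it to $0$, decrease it as much as the remaining budget allows; leave all other reliabilities at their baseline values.
   Context: Credit-attribution game: authors $N=\{1,\dots,n\}$, papers $P_k$ with author sets $Auth_k$ and weights $w_k\in\mathbb{R}_+$. $CA(x)$ is the set of coauthors of $x$; for $l\in CA(x)$, $C(x,l)=\sum w_k$ over papers authored by both $x$ and $l$. $v_{FO}(S)=\sum\{w_k:Auth_k\subseteq S\}$. For $T\subseteq S$, $\Pi_{T,S}=\prod_{i\in T}p_i\prod_{i\in S\setminus T}(1-p_i)$; reliability extension $\overline v(S)=\sum_{T\subseteq S}v(T)\Pi_{T,S}$. Shapley value $Sh[v](x)=\frac1{n!}\sum_\pi[v(S^x_\pi\cup\{x\})-v(S^x_\pi)]$, $S^x_\pi$ the players preceding $x$ in $\pi$. Fractional attack on $x$: $p_x$ fixed; for each $j\ne x$ choose $p_j\in[0,1]$ at cost $u_j(p_j)=L_j(p^*_j-p_j)$ if $p_j<p^*_j$, $R_j(p_j-p^*_j)$ if $p_j\ge p^*_j$; feasible if $\sum_{j\ne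 x}u_j(p_j)\le B$; an optimal attack is a feasible profile minimizing $Sh[\overline{v_{FO}}](x)$. *)

theory Defs
  imports Complex_Main
begin

text \<open>Credit-attribution game: authors N, papers K, author sets Auth k, weights w k.\<close>

definition coauthors :: "'k set \<Rightarrow> ('k \<Rightarrow> 'a set) \<Rightarrow> 'a set \<Rightarrow> 'a \<Rightarrow> 'a set" where
  "coauthors K Auth N x = {l \<in> N. l \<noteq> x \<and> (\<exists>k\<in>K. x \<in> Auth k \<and> l \<in> Auth k)}"

definition coweight :: "'k set \<Rightarrow> ('k \<Rightarrow> 'a set) \<Rightarrow> ('k \<Rightarrow> real) \<Rightarrow> 'a \<Rightarrow> 'a \<Rightarrow> real" where
  "coweight K Auth w x l = (\<Sum>k\<in>{k\<in>K. x \<in> Auth k \<and> l \<in> Auth k}. w k)"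

definition v_FO :: "'k set \<Rightarrow> ('k \<Rightarrow> 'a set) \<Rightarrow> ('k \<Rightarrow> real) \<Rightarrow> 'a set \<Rightarrow> real" where
  "v_FO K Auth w S = (\<Sum>k\<in>{k\<in>K. Auth k \<subseteq> S}. w k)"

definition rel_ext :: "('a \<Rightarrow> real) \<Rightarrow> ('a set \<Rightarrow> real) \<Rightarrow> 'a set \<Rightarrow> real" where
  "rel_ext p v S = (\<Sum>T\<in>Pow S. v T * (\<Prod>i\<in>T. p i) * (\<Prod>i\<in>S - T. 1 - p i))"

definition orderings :: "'a set \<Rightarrow> 'a list set" where
  "orderings N = {xs. distinct xs \<and> set xs = N}"

definition preceding :: "'a list \<Rightarrow> 'a \<Rightarrow> 'a set" where
  "preceding xs x = set (takeWhile (\<lambda>y. y \<noteq> x) xs)"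

definition shapley :: "'a set \<Rightarrow> ('a set \<Rightarrow> real) \<Rightarrow> 'a \<Rightarrow> real" where
  "shapley N v x = (1 / fact (card N)) *
     (\<Sum>\<pi>\<in>orderings N. v (insert x (preceding \<pi> x)) - v (preceding \<pi> x))"

definition attack_cost :: "('a \<Rightarrow> real) \<Rightarrow> ('a \<Rightarrow> real) \<Rightarrow> ('a \<Rightarrow> real) \<Rightarrow> 'a \<Rightarrow> real \<Rightarrow> real" where
  "attack_cost L R pstar j q = (if q < pstar j then L j * (pstar j - q) else R j * (q - pstar j))"

definition feasible_attack ::
  "'a set \<Rightarrow> 'a \<Rightarrow> real \<Rightarrow> ('a \<Rightarrow> real) \<Rightarrow> ('a \<Rightarrow> real) \<Rightarrow> ('a \<Rightarrow> real) \<Rightarrow> real \<Rightarrow> ('a \<Rightarrow> real) \<Rightarrow> bool" where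
  "feasible_attack N x px pstar L R B p \<longleftrightarrow>
     p x = px \<and> (\<forall>j\<in>N - {x}. 0 \<le> p j \<and> p j \<le> 1) \<and>
     (\<Sum>j\<in>N - {x}. attack_cost L R pstar j (p j)) \<le> B"

definition optimal_attack ::
  "'k set \<Rightarrow> ('k \<Rightarrow> 'a set) \<Rightarrow> ('k \<Rightarrow> real) \<Rightarrow> 'a set \<Rightarrow> 'a \<Rightarrow> real \<Rightarrow> ('a \<Rightarrow> real) \<Rightarrow>
   ('a \<Rightarrow> real) \<Rightarrow> ('a \<Rightarrow> real) \<Rightarrow> real \<Rightarrow> ('a \<Rightarrow> real) \<Rightarrow> bool" where
  "optimal_attack K Auth w N x px pstar L R B p \<longleftrightarrow>
     feasible_attack N x px pstar L R B p \<and>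
     (\<forall>q. feasible_attack N x px pstar L R B q \<longrightarrow>
        shapley N (rel_ext p (v_FO K Auth w)) x \<le> shapley N (rel_ext q (v_FO K Auth w)) x)"

fun greedy_profile :: "('a \<Rightarrow> real) \<Rightarrow> ('a \<Rightarrow> real) \<Rightarrow> real \<Rightarrow> 'a list \<Rightarrow> ('a \<Rightarrow> real)" where
  "greedy_profile L pstar b [] = pstar"
| "greedy_profile L pstar b (l # ls) =
     (let d = min (pstar l) (b / L l)
      in (greedy_profile L pstar (b - L l * d) ls)(l := pstar l - d))"

end

theory Submission
  imports Defs
begin


fun gv :: "('a\<Rightarrow>real) \<Rightarrow> ('a\<Rightarrow>real) \<Rightarrow> ('a\<Rightarrow>real) \<Rightarrow> real \<Rightarrow> 'a list \<Rightarrow> real" where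
  "gv C L pstar b [] = 0"
| "gv C L pstar b (l # ls) = (let d = min (pstar l) (b / L l) in C l * d + gv C L pstar (b - L l * d) ls)"

lemma greedy_other: "m \<notin> set ls \<Longrightarrow> greedy_profile L pstar b ls m = pstar m"
  by (induction ls arbitrary: b) (auto simp: Let_def)

lemma greedy_sum: "distinct ls \<Longrightarrow>
  (\<Sum>m\<in>set ls. C m * (pstar m - greedy_profile L pstar b ls m)) = gv C L pstar b ls"
proof (induction ls arbitrary: b)
  case Nil then show ?case by simp
next
  case (Cons l ls)
  define d where "d = min (pstar l) (b / L l)"
  have eq: "(\<Sum>m\<in>set ls. C m * (pstar m - greedy_profile L pstar b (l#ls) m)) =
        (\<Sum>m\<in>set ls. C m * (pstar m - greedy_profile L pstar (b - L l * d) ls m))"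
    by (rule sum.cong) (use Cons.prems in \<open>auto simp: Let_def d_def\<close>)
  have "(\<Sum>m\<in>set (l#ls). C m * (pstar m - greedy_profile L pstar b (l#ls) m)) =
     C l * (pstar l - greedy_profile L pstar b (l#ls) l) +
     (\<Sum>m\<in>set ls. C m * (pstar m - greedy_profile L pstar b (l#ls) m))"
    using Cons.prems by simp
  also have "\<dots> = C l * d + gv C L pstar (b - L l * d) ls"
    unfolding eq using Cons by (simp add: Let_def d_def)
  finally show ?case by (simp add: Let_def d_def)
qed

lemma greedy_bounds:
  assumes "b \<ge> 0" "distinct ls" "\<forall>l\<in>set ls. pstar l > 0 \<and> L l > 0"
  shows "(\<forall>m\<in>set ls. 0 \<le> pstar m - greedy_profile L pstar b ls m \<and>
            pstar m - greedy_profile L pstar b ls m \<le> pstar m) \<and>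
         (\<Sum>m\<in>set ls. L m * (pstar m - greedy_profile L pstar b ls m)) \<le> b"
  using assms
proof (induction ls arbitrary: b)
  case Nil then show ?case by simp
next
  case (Cons l ls)
  define d where "d = min (pstar l) (b / L l)"
  have Ll: "L l > 0" "pstar l > 0" using Cons.prems by auto
  have d0: "0 \<le> d" "d \<le> pstar l" "d \<le> b / L l" using Ll Cons.prems(1) by (auto simp: d_def)
  have Ld: "L l * d \<le> b" using d0(3) Ll by (simp add: field_simps)
  have IH: "(\<forall>m\<in>set ls. 0 \<le> pstar m - greedy_profile L pstar (b - L l * d) ls m \<and>
            pstar m - greedy_profile L pstar (b - L l * d) ls m \<le> pstar m) \<and>
         (\<Sum>m\<in>set ls. L m * (pstar m - greedy_profile L pstar (b - L l * d) ls m)) \<le> b - L l * d"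
    using Cons.IH[of "b - L l * d"] Cons.prems Ld by auto
  have Gdef: "greedy_profile L pstar b (l#ls) = (greedy_profile L pstar (b - L l * d) ls)(l := pstar l - d)"
    by (simp add: Let_def d_def)
  have eq: "(\<Sum>m\<in>set ls. L m * (pstar m - ((greedy_profile L pstar (b - L l * d) ls)(l := pstar l - d)) m)) =
        (\<Sum>m\<in>set ls. L m * (pstar m - greedy_profile L pstar (b - L l * d) ls m))"
    by (rule sum.cong) (use Cons.prems in auto)
  show ?case unfolding Gdef
    using IH Cons.prems d0 Ld eq by auto
qed

lemma knap:
  assumes "distinct ls" "\<forall>l\<in>set ls. L l > 0 \<and> pstar l > 0" "\<forall>l\<in>set ls. C l \<ge> 0"
    "\<forall>l\<in>set ls. C l / L l \<le> lam" "lam \<ge> 0"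
    "sorted_wrt (\<lambda>a b. C a / L a \<ge> C b / L b) ls"
    "\<forall>l\<in>set ls. 0 \<le> e l \<and> e l \<le> pstar l" "t \<ge> 0"
    "(\<Sum>m\<in>set ls. L m * e m) \<le> b + t"
  shows "(\<Sum>m\<in>set ls. C m * e m) \<le> gv C L pstar b ls + lam * t"
  using assms
proof (induction ls arbitrary: b t lam)
  case Nil then show ?case by simp
next
  case (Cons l ls)
  define d where "d = min (pstar l) (b / L l)"
  define b' where "b' = b - L l * d"
  define t' where "t' = t + L l * (d - e l)"
  have Ll: "L l > 0" "pstar l > 0" "C l \<ge> 0" "0 \<le> e l" "e l \<le> pstar l" using Cons.prems by auto
  have S0: "(\<Sum>m\<in>set ls. L m * e m) \<ge> 0"
    using Cons.prems(2,7) by (intro sum_nonneg) auto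
  have Sb: "(\<Sum>m\<in>set ls. L m * e m) \<le> b' + t'"
    using Cons.prems(1,9) by (simp add: b'_def t'_def algebra_simps)
  have t'0: "t' \<ge> 0"
  proof (cases "e l \<le> d")
    case True then show ?thesis using Ll Cons.prems(8) by (simp add: t'_def)
  next
    case False
    then have "d = b / L l" using Ll by (auto simp: d_def)
    then have "b' = 0" using Ll by (simp add: b'_def)
    then show ?thesis using Sb S0 by linarith
  qed
  have lam': "\<forall>m\<in>set ls. C m / L m \<le> C l / L l" using Cons.prems(6) by simp
  have IH: "(\<Sum>m\<in>set ls. C m * e m) \<le> gv C L pstar b' ls + (C l / L l) * t'"
    using Cons.IH[of "C l / L l" t' b'] Cons.prems lam' t'0 Sb Ll by auto
  have "(C l / L l) * t' = (C l / L l) * t + C l * d - C l * e l"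
    using Ll by (simp add: t'_def field_simps)
  moreover have "(C l / L l) * t \<le> lam * t" using Cons.prems(4,8) by (intro mult_right_mono) auto
  moreover have "gv C L pstar b (l#ls) = C l * d + gv C L pstar b' ls" by (simp add: Let_def d_def b'_def)
  moreover have "(\<Sum>m\<in>set (l#ls). C m * e m) = C l * e l + (\<Sum>m\<in>set ls. C m * e m)"
    using Cons.prems(1) by simp
  ultimately show ?case using IH by linarith
qed



lemma unan_sum:
  fixes p :: "'a \<Rightarrow> real"
  assumes "finite S" "A \<subseteq> S"
  shows "(\<Sum>T\<in>Pow S. (if A \<subseteq> T then (\<Prod>i\<in>T. p i) * (\<Prod>i\<in>S - T. 1 - p i) else 0)) = prod p A"
proof -
  define g where "g i = (if i \<in> A then 0 else 1 - p i)" for i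
  have "(\<Prod>i\<in>S. p i + g i) = (\<Sum>T\<in>Pow S. prod p T * prod g (S - T))"
    using assms(1) by (rule prod_add)
  moreover have "(\<Prod>i\<in>S. p i + g i) = prod p A"
  proof -
    have "(\<Prod>i\<in>S. p i + g i) = (\<Prod>i\<in>S. if i \<in> A then p i else 1)"
      by (rule prod.cong) (auto simp: g_def)
    also have "\<dots> = prod p (S \<inter> A)" using assms(1) by (rule prod.inter_restrict[symmetric])
    also have "S \<inter> A = A" using assms(2) by auto
    finally show ?thesis .
  qed
  moreover have tm: "prod p T * prod g (S - T) = (if A \<subseteq> T then (\<Prod>i\<in>T. p i) * (\<Prod>i\<in>S - T. 1 - p i) else 0)"
    if "T \<in> Pow S" for T
  proof (cases "A \<subseteq> T")
    case True
    have "prod g (S - T) = (\<Prod>i\<in>S - T. 1 - p i)"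
      by (rule prod.cong) (use True in \<open>auto simp: g_def\<close>)
    then show ?thesis using True by simp
  next
    case False
    then obtain i where "i \<in> A" "i \<notin> T" by auto
    moreover have "i \<in> S - T" using \<open>i \<in> A\<close> \<open>i \<notin> T\<close> assms(2) by blast
    moreover have "g i = 0" using \<open>i \<in> A\<close> by (simp add: g_def)
    ultimately have "prod g (S - T) = 0"
      using assms(1) by (intro prod_zero) auto
    then show ?thesis using False by simp
  qed
  moreover have "(\<Sum>T\<in>Pow S. prod p T * prod g (S - T)) = (\<Sum>T\<in>Pow S. (if A \<subseteq> T then (\<Prod>i\<in>T. p i) * (\<Prod>i\<in>S - T. 1 - p i) else 0))"
    by (rule sum.cong[OF refl]) (rule tm)
  ultimately show ?thesis by simp
qed

lemma rel_ext_formula: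
  assumes "finite S" "finite K"
  shows "rel_ext p (v_FO K Auth w) S = (\<Sum>k\<in>K. if Auth k \<subseteq> S then w k * prod p (Auth k) else 0)"
proof -
  define P where "P T = (\<Prod>i\<in>T. p i) * (\<Prod>i\<in>S - T. 1 - p i)" for T
  have v: "v_FO K Auth w T = (\<Sum>k\<in>K. if Auth k \<subseteq> T then w k else 0)" for T
    unfolding v_FO_def using assms(2) by (rule sum.inter_filter)
  have "rel_ext p (v_FO K Auth w) S = (\<Sum>T\<in>Pow S. \<Sum>k\<in>K. if Auth k \<subseteq> T then w k * P T else 0)"
    unfolding rel_ext_def v P_def
    by (intro sum.cong refl) (simp add: sum_distrib_right mult.assoc, intro sum.cong refl, simp)
  also have "\<dots> = (\<Sum>k\<in>K. \<Sum>T\<in>Pow S. if Auth k \<subseteq> T then w k * P T else 0)"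
    by (rule sum.swap)
  also have "\<dots> = (\<Sum>k\<in>K. if Auth k \<subseteq> S then w k * prod p (Auth k) else 0)"
  proof (rule sum.cong[OF refl])
    fix k assume "k \<in> K"
    have e: "(\<Sum>T\<in>Pow S. if Auth k \<subseteq> T then w k * P T else 0) = w k * (\<Sum>T\<in>Pow S. if Auth k \<subseteq> T then P T else 0)"
      by (simp add: sum_distrib_left) (intro sum.cong refl, simp)
    show "(\<Sum>T\<in>Pow S. if Auth k \<subseteq> T then w k * P T else 0) = (if Auth k \<subseteq> S then w k * prod p (Auth k) else 0)"
    proof (cases "Auth k \<subseteq> S")
      case True
      have "(\<Sum>T\<in>Pow S. if Auth k \<subseteq> T then P T else 0) = prod p (Auth k)"
        unfolding P_def by (rule unan_sum[OF assms(1) True])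
      then show ?thesis using e True by simp
    next
      case False
      then have "\<And>T. T \<in> Pow S \<Longrightarrow> \<not> Auth k \<subseteq> T" by auto
      then show ?thesis using False by simp
    qed
  qed
  finally show ?thesis .
qed

definition oth :: "('k \<Rightarrow> 'a set) \<Rightarrow> 'a \<Rightarrow> 'k \<Rightarrow> 'a" where
  "oth Auth x k = the_elem (Auth k - {x})"

lemma auth_pair:
  assumes "card (Auth k) = 2" "x \<in> Auth k"
  shows "\<exists>y. Auth k = {x, y} \<and> y \<noteq> x \<and> oth Auth x k = y"
proof -
  obtain a b where ab: "Auth k = {a, b}" "a \<noteq> b" using assms(1) by (auto simp: card_2_iff)
  then obtain y where "Auth k = {x, y}" "y \<noteq> x" using assms(2) by auto
  moreover then have "Auth k - {x} = {y}" by auto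
  ultimately show ?thesis by (simp add: oth_def)
qed

lemma marginal:
  assumes "finite S" "finite K" "x \<notin> S" "\<And>k. k \<in> K \<Longrightarrow> card (Auth k) = 2"
  shows "rel_ext p (v_FO K Auth w) (insert x S) - rel_ext p (v_FO K Auth w) S =
    (\<Sum>k\<in>K. if x \<in> Auth k \<and> oth Auth x k \<in> S then w k * (p x * p (oth Auth x k)) else 0)"
proof -
  have "rel_ext p (v_FO K Auth w) (insert x S) - rel_ext p (v_FO K Auth w) S =
     (\<Sum>k\<in>K. (if Auth k \<subseteq> insert x S then w k * prod p (Auth k) else 0) -
               (if Auth k \<subseteq> S then w k * prod p (Auth k) else 0))"
    unfolding rel_ext_formula[OF finite_insert[THEN iffD2, OF assms(1)] assms(2)] rel_ext_formula[OF assms(1,2)]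
    by (rule sum_subtractf[symmetric])
  also have "\<dots> = (\<Sum>k\<in>K. if x \<in> Auth k \<and> oth Auth x k \<in> S then w k * (p x * p (oth Auth x k)) else 0)"
  proof (rule sum.cong[OF refl])
    fix k assume k: "k \<in> K"
    show "(if Auth k \<subseteq> insert x S then w k * prod p (Auth k) else 0) -
               (if Auth k \<subseteq> S then w k * prod p (Auth k) else 0) =
       (if x \<in> Auth k \<and> oth Auth x k \<in> S then w k * (p x * p (oth Auth x k)) else 0)"
    proof (cases "x \<in> Auth k")
      case True
      then obtain y where a: "Auth k = {x, y}" "y \<noteq> x" "oth Auth x k = y" using auth_pair[of Auth k x, OF assms(4)[OF k] True] by blast
      have "\<not> Auth k \<subseteq> S" using True assms(3) by auto
      moreover have "prod p (Auth k) = p x * p y" using a by simp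
      moreover have "Auth k \<subseteq> insert x S \<longleftrightarrow> y \<in> S" using a by auto
      ultimately show ?thesis using True a(3) by simp
    next
      case False
      then have "Auth k \<subseteq> insert x S \<longleftrightarrow> Auth k \<subseteq> S" by auto
      then show ?thesis using False by simp
    qed
  qed
  finally show ?thesis .
qed

lemma finite_orderings: "finite N \<Longrightarrow> finite (orderings N)"
  by (rule finite_subset[OF _ finite_subset_distinct[of N]]) (auto simp: orderings_def)

lemma preceding_sub: "x \<notin> preceding \<pi> x" "\<pi> \<in> orderings N \<Longrightarrow> preceding \<pi> x \<subseteq> N"
  unfolding preceding_def orderings_def
  by (auto dest: set_takeWhileD)

lemma cnt_le:
  assumes "finite N" "l \<in> N" "m \<in> N" "l \<noteq> x" "m \<noteq> x"
  shows "card {\<pi>\<in>orderings N. l \<in> preceding \<pi> x} \<le> card {\<pi>\<in>orderings N. m \<in> preceding \<pi> x}"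
proof -
  define f where "f y = (if y = l then m else if y = m then l else y)" for y
  have ff: "f (f y) = y" for y by (auto simp: f_def)
  have injf: "inj f" by (metis ff injI)
  have fN: "f ` N = N"
  proof
    show "f ` N \<subseteq> N" using assms by (auto simp: f_def)
    show "N \<subseteq> f ` N"
    proof
      fix y assume "y \<in> N"
      then have "f y \<in> N" using \<open>f ` N \<subseteq> N\<close> by blast
      moreover have "y = f (f y)" by (simp add: ff)
      ultimately show "y \<in> f ` N" by blast
    qed
  qed
  have fx: "(\<lambda>y. y \<noteq> x) \<circ> f = (\<lambda>y. y \<noteq> x)" using assms by (auto simp: f_def)
  have pre: "preceding (map f \<pi>) x = f ` preceding \<pi> x" for \<pi>
    unfolding preceding_def takeWhile_map fx by simp
  have "inj_on (map f) {\<pi>\<in>orderings N. l \<in> preceding \<pi> x}"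
    by (rule inj_onI) (simp add: inj_map_eq_map[OF injf])
  moreover have "map f ` {\<pi>\<in>orderings N. l \<in> preceding \<pi> x} \<subseteq> {\<pi>\<in>orderings N. m \<in> preceding \<pi> x}"
  proof
    fix \<sigma> assume "\<sigma> \<in> map f ` {\<pi>\<in>orderings N. l \<in> preceding \<pi> x}"
    then obtain \<pi> where s: "\<sigma> = map f \<pi>" "\<pi> \<in> orderings N" "l \<in> preceding \<pi> x" by auto
    have "inj_on f (set \<pi>)" using injf by (rule inj_on_subset) simp
    then have "distinct \<sigma>" using s(1,2) by (simp add: orderings_def distinct_map)
    moreover have "set \<sigma> = N" using s fN by (auto simp: orderings_def)
    moreover have "m \<in> preceding \<sigma> x"
    proof -
      have "f l = m" by (simp add: f_def)
      then have "m \<in> f ` preceding \<pi> x" using s(3) by blast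
      then show ?thesis unfolding s(1) pre .
    qed
    ultimately show "\<sigma> \<in> {\<pi>\<in>orderings N. m \<in> preceding \<pi> x}" by (auto simp: orderings_def)
  qed
  moreover have "finite {\<pi>\<in>orderings N. m \<in> preceding \<pi> x}" using finite_orderings[OF assms(1)] by simp
  ultimately show ?thesis by (rule card_inj_on_le)
qed



lemma group_sum:
  assumes "finite K" "\<And>k. k \<in> K \<Longrightarrow> Auth k \<subseteq> N" "\<And>k. k \<in> K \<Longrightarrow> card (Auth k) = 2"
  shows "(\<Sum>k\<in>K. if x \<in> Auth k then w k * p (oth Auth x k) else 0) =
         (\<Sum>l\<in>coauthors K Auth N x. coweight K Auth w x l * p l)"
proof -
  define Kx where "Kx = {k\<in>K. x \<in> Auth k}"
  have fin: "finite Kx" using assms(1) by (simp add: Kx_def)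
  have "(\<Sum>k\<in>K. if x \<in> Auth k then w k * p (oth Auth x k) else 0) = (\<Sum>k\<in>Kx. w k * p (oth Auth x k))"
    unfolding Kx_def using assms(1) by (simp add: sum.inter_filter)
  also have "\<dots> = (\<Sum>l\<in>oth Auth x ` Kx. \<Sum>k\<in>{k\<in>Kx. oth Auth x k = l}. w k * p (oth Auth x k))"
    using fin by (rule sum.image_gen)
  also have "oth Auth x ` Kx = coauthors K Auth N x"
  proof
    show "oth Auth x ` Kx \<subseteq> coauthors K Auth N x"
    proof
      fix l assume "l \<in> oth Auth x ` Kx"
      then obtain k where k: "k \<in> K" "x \<in> Auth k" "l = oth Auth x k" by (auto simp: Kx_def)
      then obtain y where "Auth k = {x, y}" "y \<noteq> x" "oth Auth x k = y" using auth_pair[of Auth k x, OF assms(3)[OF k(1)] k(2)] by blast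
      then show "l \<in> coauthors K Auth N x" using k assms(2)[OF k(1)] by (auto simp: coauthors_def)
    qed
    show "coauthors K Auth N x \<subseteq> oth Auth x ` Kx"
    proof
      fix l assume "l \<in> coauthors K Auth N x"
      then obtain k where k: "k \<in> K" "x \<in> Auth k" "l \<in> Auth k" "l \<noteq> x" by (auto simp: coauthors_def)
      then obtain y where "Auth k = {x, y}" "y \<noteq> x" "oth Auth x k = y" using auth_pair[of Auth k x, OF assms(3)[OF k(1)] k(2)] by blast
      then show "l \<in> oth Auth x ` Kx" using k by (auto simp: Kx_def)
    qed
  qed
  also have "(\<Sum>l\<in>coauthors K Auth N x. \<Sum>k\<in>{k\<in>Kx. oth Auth x k = l}. w k * p (oth Auth x k)) =
        (\<Sum>l\<in>coauthors K Auth N x. coweight K Auth w x l * p l)"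
  proof (rule sum.cong[OF refl])
    fix l assume l: "l \<in> coauthors K Auth N x"
    have "{k\<in>Kx. oth Auth x k = l} = {k\<in>K. x \<in> Auth k \<and> l \<in> Auth k}"
    proof safe
      fix k assume kk: "k \<in> Kx" "l = oth Auth x k"
      then have k1: "k \<in> K" "x \<in> Auth k" by (auto simp: Kx_def)
      obtain y where "Auth k = {x, y}" "y \<noteq> x" "oth Auth x k = y" using auth_pair[of Auth k x, OF assms(3)[OF k1(1)] k1(2)] by blast
      then show "k \<in> K" "x \<in> Auth k" "oth Auth x k \<in> Auth k" using k1 by auto
    next
      fix k assume k: "k \<in> K" "x \<in> Auth k" "l \<in> Auth k"
      then show "k \<in> Kx" by (simp add: Kx_def)
      obtain y where "Auth k = {x, y}" "y \<noteq> x" "oth Auth x k = y" using auth_pair[of Auth k x, OF assms(3)[OF k(1)] k(2)] by blast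
      then show "oth Auth x k = l" using k l by (auto simp: coauthors_def)
    qed
    note eqS = this
    have "(\<Sum>k\<in>{k\<in>Kx. oth Auth x k = l}. w k * p (oth Auth x k)) = (\<Sum>k\<in>{k\<in>Kx. oth Auth x k = l}. w k * p l)"
      by (rule sum.cong) auto
    also have "\<dots> = coweight K Auth w x l * p l"
      unfolding eqS coweight_def by (rule sum_distrib_right[symmetric])
    finally show "(\<Sum>k\<in>{k\<in>Kx. oth Auth x k = l}. w k * p (oth Auth x k)) = coweight K Auth w x l * p l" .
  qed
  finally show ?thesis .
qed

lemma shapley_formula:
  assumes "finite N" "finite K" "x \<in> N" "\<And>k. k \<in> K \<Longrightarrow> Auth k \<subseteq> N"
    "\<And>k. k \<in> K \<Longrightarrow> card (Auth k) = 2"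
  shows "\<exists>c\<ge>0. \<forall>p. shapley N (rel_ext p (v_FO K Auth w)) x =
           c * p x * (\<Sum>l\<in>coauthors K Auth N x. coweight K Auth w x l * p l)"
proof -
  define cnt where "cnt l = card {\<pi>\<in>orderings N. l \<in> preceding \<pi> x}" for l
  have finO: "finite (orderings N)" using assms(1) by (rule finite_orderings)
  have othN: "oth Auth x k \<in> N \<and> oth Auth x k \<noteq> x" if "k \<in> K" "x \<in> Auth k" for k
    using auth_pair[of Auth k x, OF assms(5)[OF that(1)] that(2)] assms(4)[OF that(1)] by auto
  have A: "shapley N (rel_ext p (v_FO K Auth w)) x = (1 / fact (card N)) *
     (\<Sum>k\<in>K. if x \<in> Auth k then w k * (p x * p (oth Auth x k)) * real (cnt (oth Auth x k)) else 0)" for p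
  proof -
    have "(\<Sum>\<pi>\<in>orderings N. rel_ext p (v_FO K Auth w) (insert x (preceding \<pi> x)) - rel_ext p (v_FO K Auth w) (preceding \<pi> x))
       = (\<Sum>\<pi>\<in>orderings N. \<Sum>k\<in>K. if x \<in> Auth k \<and> oth Auth x k \<in> preceding \<pi> x then w k * (p x * p (oth Auth x k)) else 0)"
      by (rule sum.cong[OF refl], rule marginal)
         (use assms in \<open>auto simp: preceding_sub(1), simp add: preceding_def\<close>)
    also have "\<dots> = (\<Sum>k\<in>K. \<Sum>\<pi>\<in>orderings N. if x \<in> Auth k \<and> oth Auth x k \<in> preceding \<pi> x then w k * (p x * p (oth Auth x k)) else 0)"
      by (rule sum.swap)
    also have "\<dots> = (\<Sum>k\<in>K. if x \<in> Auth k then w k * (p x * p (oth Auth x k)) * real (cnt (oth Auth x k)) else 0)"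
    proof (rule sum.cong[OF refl])
      fix k assume "k \<in> K"
      show "(\<Sum>\<pi>\<in>orderings N. if x \<in> Auth k \<and> oth Auth x k \<in> preceding \<pi> x then w k * (p x * p (oth Auth x k)) else 0) =
        (if x \<in> Auth k then w k * (p x * p (oth Auth x k)) * real (cnt (oth Auth x k)) else 0)"
      proof (cases "x \<in> Auth k")
        case True
        have "(\<Sum>\<pi>\<in>orderings N. if oth Auth x k \<in> preceding \<pi> x then w k * (p x * p (oth Auth x k)) else 0)
           = (\<Sum>\<pi>\<in>{\<pi>\<in>orderings N. oth Auth x k \<in> preceding \<pi> x}. w k * (p x * p (oth Auth x k)))"
          by (rule sum.inter_filter[OF finO, symmetric])
        also have "\<dots> = w k * (p x * p (oth Auth x k)) * real (cnt (oth Auth x k))"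
          by (simp add: cnt_def)
        finally show ?thesis using True by simp
      qed simp
    qed
    finally show ?thesis unfolding shapley_def by simp
  qed
  show ?thesis
  proof (cases "\<exists>k0\<in>K. x \<in> Auth k0")
    case False
    then have "shapley N (rel_ext p (v_FO K Auth w)) x = 0" for p unfolding A by simp
    then show ?thesis by (intro exI[of _ 0]) simp
  next
    case True
    then obtain k0 where k0: "k0 \<in> K" "x \<in> Auth k0" by blast
    define c where "c = real (cnt (oth Auth x k0)) / fact (card N)"
    have eqc: "cnt (oth Auth x k) = cnt (oth Auth x k0)" if "k \<in> K" "x \<in> Auth k" for k
      unfolding cnt_def using othN[OF that] othN[OF k0] assms(1)
      by (intro antisym cnt_le) auto
    have "shapley N (rel_ext p (v_FO K Auth w)) x =
           c * p x * (\<Sum>l\<in>coauthors K Auth N x. coweight K Auth w x l * p l)" for p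
    proof -
      have "shapley N (rel_ext p (v_FO K Auth w)) x = c * p x * (\<Sum>k\<in>K. if x \<in> Auth k then w k * p (oth Auth x k) else 0)"
        unfolding A c_def sum_distrib_left
        by (rule sum.cong[OF refl]) (auto simp: eqc)
      then show ?thesis using group_sum[OF assms(2,4,5), where x=x and w=w and p=p] by simp
    qed
    moreover have "c \<ge> 0" by (simp add: c_def)
    ultimately show ?thesis by blast
  qed
qed


theorem theorem10:
  fixes K :: "'k set" and Auth :: "'k \<Rightarrow> 'a set" and w :: "'k \<Rightarrow> real"
    and N :: "'a set" and x :: 'a and px B :: real
    and pstar L R :: "'a \<Rightarrow> real" and ls :: "'a list"
  assumes "finite N" and "finite K" and "x \<in> N"
    and "\<And>k. k \<in> K \<Longrightarrow> Auth k \<subseteq> N"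
    and "\<And>k. k \<in> K \<Longrightarrow> card (Auth k) = 2"
    and "\<And>k. k \<in> K \<Longrightarrow> w k \<ge> 0"
    and "0 \<le> px" and "px \<le> 1"
    and "\<And>l. l \<in> N - {x} \<Longrightarrow> 0 < pstar l \<and> pstar l \<le> 1"
    and "\<And>l. l \<in> N - {x} \<Longrightarrow> L l > 0 \<and> R l > 0"
    and "B \<ge> 0"
    and "distinct ls" and "set ls = coauthors K Auth N x"
    and "sorted_wrt (\<lambda>a b. coweight K Auth w x a / L a \<ge> coweight K Auth w x b / L b) ls"
  shows "optimal_attack K Auth w N x px pstar L R B ((greedy_profile L pstar B ls)(x := px))"
proof -
  define C where "C = coweight K Auth w x"
  define g where "g = greedy_profile L pstar B ls"
  define p where "p = g(x := px)"
  have lsN: "set ls \<subseteq> N - {x}" using assms(13) by (auto simp: coauthors_def)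
  have pos: "\<forall>l\<in>set ls. pstar l > 0 \<and> L l > 0" using lsN assms(9,10) by blast
  have Cnn: "C l \<ge> 0" for l unfolding C_def coweight_def using assms(6) by (intro sum_nonneg) auto
  have gb: "(\<forall>m\<in>set ls. 0 \<le> pstar m - g m \<and> pstar m - g m \<le> pstar m) \<and>
         (\<Sum>m\<in>set ls. L m * (pstar m - g m)) \<le> B"
    unfolding g_def using greedy_bounds[OF assms(11,12) pos] .
  have gother: "m \<notin> set ls \<Longrightarrow> g m = pstar m" for m unfolding g_def by (rule greedy_other)
  have cost_nn: "attack_cost L R pstar j q \<ge> 0" if "j \<in> N - {x}" for j q
    using assms(10)[OF that] by (auto simp: attack_cost_def)
  have cost_L: "attack_cost L R pstar j q \<ge> L j * (pstar j - q)" if "j \<in> N - {x}" for j q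
  proof (cases "q < pstar j")
    case True then show ?thesis by (simp add: attack_cost_def)
  next
    case False
    have "L j * (pstar j - q) \<le> 0" using False assms(10)[OF that] by (intro mult_nonneg_nonpos) auto
    moreover have "R j * (q - pstar j) \<ge> 0" using False assms(10)[OF that] by simp
    ultimately show ?thesis using False by (simp add: attack_cost_def)
  qed
  have feas: "feasible_attack N x px pstar L R B p"
    unfolding feasible_attack_def
  proof (intro conjI ballI)
    show "p x = px" by (simp add: p_def)
  next
    fix j assume j: "j \<in> N - {x}"
    show "0 \<le> p j" "p j \<le> 1"
      using gb gother[of j] assms(9)[OF j] j by (cases "j \<in> set ls"; force simp: p_def)+
  next
    have "(\<Sum>j\<in>N - {x}. attack_cost L R pstar j (p j)) = (\<Sum>j\<in>N - {x}. if j \<in> set ls then L j * (pstar j - g j) else 0)"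
    proof (rule sum.cong[OF refl])
      fix j assume j: "j \<in> N - {x}"
      show "attack_cost L R pstar j (p j) = (if j \<in> set ls then L j * (pstar j - g j) else 0)"
        using gb gother[of j] j by (cases "j \<in> set ls") (auto simp: p_def attack_cost_def)
    qed
    also have "\<dots> = (\<Sum>j\<in>(N - {x}) \<inter> set ls. L j * (pstar j - g j))"
      using assms(1) by (simp add: sum.inter_restrict)
    also have "(N - {x}) \<inter> set ls = set ls" using lsN by auto
    finally show "(\<Sum>j\<in>N - {x}. attack_cost L R pstar j (p j)) \<le> B" using gb by simp
  qed
  obtain c where c: "c \<ge> 0" "\<And>q. shapley N (rel_ext q (v_FO K Auth w)) x =
           c * q x * (\<Sum>l\<in>coauthors K Auth N x. C l * q l)"
    using shapley_formula[where N=N and K=K and x=x and Auth=Auth and w=w, OF assms(1-5)] unfolding C_def by blast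
  have opt: "shapley N (rel_ext p (v_FO K Auth w)) x \<le> shapley N (rel_ext q (v_FO K Auth w)) x"
    if q: "feasible_attack N x px pstar L R B q" for q
  proof -
    have qx: "q x = px" and qb: "\<forall>j\<in>N - {x}. 0 \<le> q j \<and> q j \<le> 1"
      and qc: "(\<Sum>j\<in>N - {x}. attack_cost L R pstar j (q j)) \<le> B"
      using q by (auto simp: feasible_attack_def)
    define e where "e l = max (pstar l - q l) 0" for l
    have ebox: "\<forall>l\<in>set ls. 0 \<le> e l \<and> e l \<le> pstar l" using qb lsN pos by (auto simp: e_def)
    have "(\<Sum>m\<in>set ls. L m * e m) \<le> (\<Sum>m\<in>set ls. attack_cost L R pstar m (q m))"
    proof (rule sum_mono)
      fix m assume m: "m \<in> set ls"
      then have mN: "m \<in> N - {x}" using lsN by auto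
      show "L m * e m \<le> attack_cost L R pstar m (q m)"
        using cost_L[OF mN, of "q m"] cost_nn[OF mN, of "q m"] by (auto simp: e_def max_def)
    qed
    also have "\<dots> \<le> (\<Sum>j\<in>N - {x}. attack_cost L R pstar j (q j))"
      using assms(1) lsN cost_nn by (intro sum_mono2) auto
    finally have eB: "(\<Sum>m\<in>set ls. L m * e m) \<le> B + 0" using qc by simp
    define lam where "lam = (\<Sum>l\<in>set ls. C l / L l)"
    have lam: "\<forall>l\<in>set ls. C l / L l \<le> lam" "lam \<ge> 0"
      unfolding lam_def using Cnn pos
      by (auto intro!: member_le_sum sum_nonneg)
    have K1: "(\<Sum>m\<in>set ls. C m * e m) \<le> gv C L pstar B ls + lam * 0"
      using knap[OF assms(12) _ _ lam(1,2) _ ebox _ eB] pos Cnn assms(14)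
      unfolding C_def by auto
    have K2: "gv C L pstar B ls = (\<Sum>m\<in>set ls. C m * (pstar m - g m))"
      unfolding g_def by (rule greedy_sum[OF assms(12), symmetric])
    have "(\<Sum>l\<in>set ls. C l * p l) = (\<Sum>l\<in>set ls. C l * pstar l) - (\<Sum>m\<in>set ls. C m * (pstar m - g m))"
      using lsN by (simp add: p_def sum_subtractf[symmetric] algebra_simps) (intro sum.cong refl, auto)
    also have "\<dots> \<le> (\<Sum>l\<in>set ls. C l * pstar l) - (\<Sum>m\<in>set ls. C m * e m)" using K1 K2 by simp
    also have "\<dots> = (\<Sum>l\<in>set ls. C l * (pstar l - e l))" by (simp add: sum_subtractf[symmetric] algebra_simps)
    also have "\<dots> \<le> (\<Sum>l\<in>set ls. C l * q l)"
      using Cnn by (intro sum_mono mult_left_mono) (auto simp: e_def)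
    finally have G: "(\<Sum>l\<in>set ls. C l * p l) \<le> (\<Sum>l\<in>set ls. C l * q l)" .
    have "c * p x \<ge> 0" using c(1) assms(7) by (simp add: p_def)
    with G have "c * p x * (\<Sum>l\<in>set ls. C l * p l) \<le> c * p x * (\<Sum>l\<in>set ls. C l * q l)"
      by (intro mult_left_mono)
    then show ?thesis unfolding c(2) using qx assms(13) by (simp add: p_def)
  qed
  show ?thesis unfolding optimal_attack_def using feas opt by (simp add: p_def g_def)
qed

end
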